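(* For every integer $k\ge1$, the series $G_k(x)=1+\sum_{n\ge0}\big|\mathcal A_{n}^{(k)}\big|x^{n+1}$ satisfies $$G_k(x)=-\frac{U_{k-2}(x/2)+(-1)^kU_{k-3}(x/2)}{U_k(x/2)+(-1)^kU_{k-1}(x/2)}.$$
   Context: For integers $n\ge0$ and $k\ge1$, $\mathcal A_n^{(k)}$ is the set of all integer sequences $(a_1,\dots,a_n)$ with $1\le a_i\le k$ and $a_1\le a_2\ge a_3\le a_4\ge\cdots$ (i.e. $a_{2j-1}\le a_{2j}$ and $a_{2j}\ge a_{2j+1}$ whenever defined); $\mathcal A_0^{(k)}$ consists of the empty sequence. $U_n$ is the Chebyshev polynomial of the second kind, defined for all integers $n$ by $U_0=1$, $U_1(x)=2x$ and $U_{n+1}(x)=2xU_n(x)-U_{n-1}(x)$ (so $U_{-1}=0$, $U_{-2}=-1$). *)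

theory Defs
  imports "HOL-Computational_Algebra.Formal_Power_Series"
begin

text \<open>A sequence is a list; list index i (0-based)
  corresponds to a_(i+1), so for even i we need a!i <= a!(i+1), for odd i a!i >= a!(i+1).\<close>
definition alt_seqs :: "nat \<Rightarrow> nat \<Rightarrow> int list set" where
  "alt_seqs n k = {a. length a = n \<and> (\<forall>i<n. 1 \<le> a!i \<and> a!i \<le> int k) \<and>
     (\<forall>i. i + 1 < n \<longrightarrow> (if even i then a!i \<le> a!(i+1) else a!i \<ge> a!(i+1)))}"

fun chebU_nat :: "nat \<Rightarrow> 'a::comm_ring_1 \<Rightarrow> 'a" where
  "chebU_nat 0 x = 1"
| "chebU_nat (Suc 0) x = 2 * x"
| "chebU_nat (Suc (Suc n)) x = 2 * x * chebU_nat (Suc n) x - chebU_nat n x"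

text \<open>Extension to all integers via the same recurrence: U_(-1) = 0 and U_(-n-2) = - U_n.\<close>
definition chebU :: "int \<Rightarrow> 'a::comm_ring_1 \<Rightarrow> 'a" where
  "chebU n x = (if n \<ge> 0 then chebU_nat (nat n) x
                else if n = -1 then 0 else - chebU_nat (nat (-n-2)) x)"

definition G :: "nat \<Rightarrow> real fps" where
  "G k = Abs_fps (\<lambda>m. if m = 0 then 1 else real (card (alt_seqs (m - 1) k)))"

end

theory Submission
  imports Defs
begin


fun V :: "nat \<Rightarrow> 'a::idom \<Rightarrow> 'a" where
  "V 0 x = 1"
| "V (Suc 0) x = x"
| "V (Suc (Suc n)) x = x * V (Suc n) x - V n x"

fun S :: "nat \<Rightarrow> 'a::idom \<Rightarrow> 'a" where
  "S 0 x = 0"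
| "S (Suc 0) x = 1"
| "S (Suc (Suc n)) x = (2 - x^2) * S (Suc n) x - S n x"

lemma chebU_nat_V: "2 * y = x \<Longrightarrow> chebU_nat n y = V n x"
  by (induction n y rule: chebU_nat.induct) auto

lemma Vrec: "k = n+2 \<Longrightarrow> j = n+1 \<Longrightarrow> V k x = x * V j x - V n x" by simp
lemma Srec: "k = n+2 \<Longrightarrow> j = n+1 \<Longrightarrow> S k x = (2 - x^2) * S j x - S n x" by simp
lemma V01: "V 0 x = 1" "V 1 x = x" "V (Suc 0) x = x" "V 2 x = x*x - 1" "V (Suc (Suc 0)) x = x*x - 1" "V (Suc (Suc (Suc 0))) x = x*x*x - 2*x" by (simp_all add: numeral_eq_Suc algebra_simps)
lemma S012: "S 0 x = 0" "S 1 x = 1" "S (Suc 0) x = 1" "S 2 x = 2 - x^2" "S (Suc (Suc 0)) x = 2 - x^2" by (simp_all add: numeral_eq_Suc)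

declare V.simps [simp del] S.simps [simp del]

lemma V_add: "V (m + n + 2) x = V (m+1) x * V (n+1) x - V m x * V n x"
proof (induction n rule: less_induct)
  case (less n)
  show ?case
  proof (cases n)
    case 0
    have b: "V (m+2) x = x * V (m+1) x - V m x" by (rule Vrec) simp_all
    have "V (m+2) x = V (m+1) x * V 1 x - V m x * V 0 x" using b by (simp add: V01)
    then show ?thesis using 0 by simp
  next
    case (Suc i) note ni = Suc
    show ?thesis
    proof (cases i)
      case 0
      have a: "V (m+3) x = x * V (m+2) x - V (m+1) x" by (rule Vrec) simp_all
      have b: "V (m+2) x = x * V (m+1) x - V m x" by (rule Vrec) simp_all
      have "V (m + n + 2) x = V (m+3) x" using ni 0 by (simp add: add.assoc numeral_eq_Suc)
      also have "\<dots> = V (m+1) x * V 2 x - V m x * V 1 x" using a b V01(2,4)[of x] by algebra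
      also have "\<dots> = V (m+1) x * V (n+1) x - V m x * V n x" using ni 0 by (simp add: numeral_eq_Suc)
      finally show ?thesis .
    next
      case (Suc l)
      have h1: "V (m + l + 2) x = V (m+1) x * V (l+1) x - V m x * V l x" using less ni Suc by simp
      have h2: "V (m + l + 3) x = V (m+1) x * V (l+2) x - V m x * V (l+1) x"
        using less[of "Suc l"] ni Suc by (simp add: add.assoc numeral_eq_Suc)
      have a: "V (m+l+4) x = x * V (m+l+3) x - V (m+l+2) x" by (rule Vrec) simp_all
      have b: "V (l+3) x = x * V (l+2) x - V (l+1) x" by (rule Vrec) simp_all
      have c: "V (l+2) x = x * V (l+1) x - V l x" by (rule Vrec) simp_all
      have "V (m + n + 2) x = V (m+l+4) x" using ni Suc by (simp add: add.assoc numeral_eq_Suc)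
      also have "\<dots> = V (m+1) x * V (l+3) x - V m x * V (l+2) x" using a b c h1 h2 by algebra
      also have "\<dots> = V (m+1) x * V (n+1) x - V m x * V n x" using ni Suc by (simp add: add.assoc numeral_eq_Suc)
      finally show ?thesis .
    qed
  qed
qed

lemma V_cassini: "V (Suc n) x ^ 2 - x * V (Suc n) x * V n x + V n x ^ 2 = 1"
proof (induction n)
  case 0 then show ?case by (simp add: V01 power2_eq_square)
next
  case (Suc n)
  have a: "V (Suc (Suc n)) x = x * V (Suc n) x - V n x" by (rule Vrec) simp_all
  show ?case using Suc a by algebra
qed

lemma V4: "k = n+4 \<Longrightarrow> j = n+2 \<Longrightarrow> V k x = (x^2 - 2) * V j x - V n x"
proof -
  assume kj: "k = n+4" "j = n+2"
  have a: "V (n+4) x = x * V (n+3) x - V (n+2) x" by (rule Vrec) simp_all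
  have b: "V (n+3) x = x * V (n+2) x - V (n+1) x" by (rule Vrec) simp_all
  have c: "V (n+2) x = x * V (n+1) x - V n x" by (rule Vrec) simp_all
  show ?thesis unfolding kj using a b c by algebra
qed

lemma S_V: "x * S (Suc j) x = (-1)^j * V (2*j+1) x"
proof (induction j rule: less_induct)
  case (less j)
  show ?case
  proof (cases j)
    case 0 then show ?thesis by (simp add: V01 S012)
  next
    case (Suc i) note ji = Suc
    show ?thesis
    proof (cases i)
      case 0 
      have "V 3 x = x * V 2 x - V 1 x" by (rule Vrec) simp_all
      then show ?thesis using ji 0 by (simp add: V01 S012 algebra_simps power2_eq_square)
    next
      case (Suc l)
      define \<sigma> where "\<sigma> = (-1::'a)^l"
      have h1: "x * S (l+1) x = \<sigma> * V (2*l+1) x" using less ji Suc by (simp add: \<sigma>_def)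
      have h2: "x * S (l+2) x = - (\<sigma> * V (2*l+3) x)" using less[of "Suc l"] ji Suc
        by (simp add: numeral_eq_Suc \<sigma>_def)
      have v: "V (2*l+5) x = (x^2 - 2) * V (2*l+3) x - V (2*l+1) x" by (rule V4) simp_all
      have s: "S (l+3) x = (2 - x^2) * S (l+2) x - S (l+1) x" by (rule Srec) simp_all
      have "x * S (Suc j) x = x * S (l+3) x" using ji Suc by (simp add: numeral_eq_Suc)
      also have "\<dots> = \<sigma> * V (2*l+5) x" using h1 h2 v s by algebra
      also have "\<dots> = (-1)^j * V (2*j+1) x" using ji Suc by (simp add: numeral_eq_Suc \<sigma>_def)
      finally show ?thesis .
    qed
  qed
qed

lemma S_diff: "S (Suc j) x - S j x = (-1)^j * V (2*j) x"
proof (induction j rule: less_induct)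
  case (less j)
  show ?case
  proof (cases j)
    case 0 then show ?thesis by (simp add: V01 S012)
  next
    case (Suc i) note ji = Suc
    show ?thesis
    proof (cases i)
      case 0 then show ?thesis using ji by (simp add: V01 S012 algebra_simps power2_eq_square)
    next
      case (Suc l)
      define \<sigma> where "\<sigma> = (-1::'a)^l"
      have h1: "S (l+1) x - S l x = \<sigma> * V (2*l) x" using less ji Suc by (simp add: \<sigma>_def)
      have h2: "S (l+2) x - S (l+1) x = - (\<sigma> * V (2*l+2) x)" using less[of "Suc l"] ji Suc
        by (simp add: numeral_eq_Suc \<sigma>_def)
      have v: "V (2*l+4) x = (x^2 - 2) * V (2*l+2) x - V (2*l) x" by (rule V4) simp_all
      have s: "S (l+3) x = (2 - x^2) * S (l+2) x - S (l+1) x" by (rule Srec) simp_all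
      have s2: "S (l+2) x = (2 - x^2) * S (l+1) x - S l x" by (rule Srec) simp_all
      have "S (Suc j) x - S j x = S (l+3) x - S (l+2) x" using ji Suc by (simp add: numeral_eq_Suc)
      also have "\<dots> = \<sigma> * V (2*l+4) x" using h1 h2 v s s2 by algebra
      also have "\<dots> = (-1)^j * V (2*j) x" using ji Suc by (simp add: numeral_eq_Suc \<sigma>_def)
      finally show ?thesis .
    qed
  qed
qed


lemma key_alg:
  fixes s W xS x V4 V5 V6 a0 a1 a2 a3 :: "'a::idom"
  assumes "s*s = 1" "W = s*V6" "xS = -(s*V5)" "V6 = x*V5 - V4" "V6 = a3*a3 - a2*a2" "V4 = a2*a2 - a1*a1"
    "a2^2 - x*a2*a1 + a1^2 = 1" "a3 = x*a2 - a1" "a2 = x*a1 - a0"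
  shows "(W + x + x*xS) * (a3 + s*a2) = -(a1 + s*a0) * W"
  using assms by algebra


fun cnt :: "nat \<Rightarrow> nat \<Rightarrow> nat \<Rightarrow> nat" where
  "cnt k 0 j = 0"
| "cnt k (Suc 0) j = (if 1 \<le> j \<and> j \<le> k then 1 else 0)"
| "cnt k (Suc (Suc n)) j = (if 1 \<le> j \<and> j \<le> k then
      (if even n then (\<Sum>i=1..j. cnt k (Suc n) i) else (\<Sum>i=j..k. cnt k (Suc n) i)) else 0)"

lemma finite_alt: "finite (alt_seqs n k)"
proof -
  have "alt_seqs n k \<subseteq> {xs. set xs \<subseteq> {1..int k} \<and> length xs = n}"
    by (auto simp: alt_seqs_def in_set_conv_nth)
  moreover have "finite {xs. set xs \<subseteq> {1..int k} \<and> length xs = n}"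
    by (rule finite_lists_length_eq) simp
  ultimately show ?thesis by (rule finite_subset)
qed

lemma alt_snoc:
  assumes "length b = m"
  shows "b @ [v] \<in> alt_seqs (Suc m) k \<longleftrightarrow> b \<in> alt_seqs m k \<and> 1 \<le> v \<and> v \<le> int k \<and>
     (m \<ge> 1 \<longrightarrow> (if even (m-1) then b!(m-1) \<le> v else v \<le> b!(m-1)))"
proof
  assume h: "b @ [v] \<in> alt_seqs (Suc m) k"
  then have r: "\<forall>i<Suc m. 1 \<le> (b@[v])!i \<and> (b@[v])!i \<le> int k"
    and a: "\<forall>i. i + 1 < Suc m \<longrightarrow> (if even i then (b@[v])!i \<le> (b@[v])!(i+1) else (b@[v])!i \<ge> (b@[v])!(i+1))"
    by (auto simp: alt_seqs_def)
  have "b \<in> alt_seqs m k"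
    unfolding alt_seqs_def
  proof (intro CollectI conjI allI impI)
    fix i assume "i < m"
    then show "1 \<le> b!i" "b!i \<le> int k" using r[rule_format, of i] assms by (auto simp: nth_append)
  next
    fix i assume i: "i + 1 < m"
    then show "if even i then b!i \<le> b!(i+1) else b!i \<ge> b!(i+1)"
      using a[rule_format, of i] assms by (auto simp: nth_append)
  qed (use assms in auto)
  moreover have "1 \<le> v" "v \<le> int k" using r[rule_format, of m] assms by auto
  moreover have "m \<ge> 1 \<longrightarrow> (if even (m-1) then b!(m-1) \<le> v else v \<le> b!(m-1))"
  proof
    assume m1: "m \<ge> 1"
    then have e1: "(b@[v])!(m-1) = b!(m-1)" using assms by (simp add: nth_append)
    have e2: "(b@[v])!(m-1+1) = v" using assms m1 by (simp add: nth_append)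
    show "if even (m-1) then b!(m-1) \<le> v else v \<le> b!(m-1)"
      using a[rule_format, of "m-1"] m1 unfolding e1 e2 by simp
  qed
  ultimately show "b \<in> alt_seqs m k \<and> 1 \<le> v \<and> v \<le> int k \<and>
     (m \<ge> 1 \<longrightarrow> (if even (m-1) then b!(m-1) \<le> v else v \<le> b!(m-1)))" by blast
next
  assume h: "b \<in> alt_seqs m k \<and> 1 \<le> v \<and> v \<le> int k \<and>
     (m \<ge> 1 \<longrightarrow> (if even (m-1) then b!(m-1) \<le> v else v \<le> b!(m-1)))"
  then have r: "\<forall>i<m. 1 \<le> b!i \<and> b!i \<le> int k"
    and a: "\<forall>i. i + 1 < m \<longrightarrow> (if even i then b!i \<le> b!(i+1) else b!i \<ge> b!(i+1))"
    by (auto simp: alt_seqs_def)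
  show "b @ [v] \<in> alt_seqs (Suc m) k"
    unfolding alt_seqs_def
  proof (intro CollectI conjI allI impI)
    fix i assume "i < Suc m"
    then show "1 \<le> (b@[v])!i" "(b@[v])!i \<le> int k" using r h assms
      by (auto simp: nth_append less_Suc_eq)
  next
    fix i assume i: "i + 1 < Suc m"
    show "if even i then (b@[v])!i \<le> (b@[v])!(i+1) else (b@[v])!i \<ge> (b@[v])!(i+1)"
    proof (cases "i + 1 < m")
      case True then show ?thesis using a assms by (auto simp: nth_append)
    next
      case False
      then have "i = m - 1" "m \<ge> 1" using i by auto
      then show ?thesis using h assms by (auto simp: nth_append)
    qed
  qed (use assms in auto)
qed



lemma alt_last_range: "a \<in> alt_seqs n k \<Longrightarrow> n \<ge> 1 \<Longrightarrow> 1 \<le> last a \<and> last a \<le> int k"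
proof -
  assume a: "a \<in> alt_seqs n k" "n \<ge> 1"
  then have l: "length a = n" by (simp add: alt_seqs_def)
  then have "last a = a ! (n-1)" using a(2) by (subst last_conv_nth) auto
  moreover have "n - 1 < n" using a(2) by simp
  ultimately show ?thesis using a(1) unfolding alt_seqs_def by auto
qed

lemma alt_length: "a \<in> alt_seqs n k \<Longrightarrow> length a = n"
  by (auto simp: alt_seqs_def)

lemma card_last: "card {a \<in> alt_seqs (Suc n) k. last a = int j} = cnt k (Suc n) j"
proof (induction n arbitrary: j)
  case 0
  have "{a \<in> alt_seqs (Suc 0) k. last a = int j} = (if 1 \<le> j \<and> j \<le> k then {[int j]} else {})"
  proof (cases "1 \<le> j \<and> j \<le> k")
    case True
    show ?thesis using True
      by (auto simp: alt_seqs_def length_Suc_conv)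
  next
    case False then show ?thesis by (auto simp: alt_seqs_def length_Suc_conv)
  qed
  then show ?case by simp
next
  case (Suc n)
  define I where "I = (if 1 \<le> j \<and> j \<le> k then (if even n then {1..j} else {j..k}) else {})"
  define B where "B = (\<Union>i\<in>I. {b \<in> alt_seqs (Suc n) k. last b = int i})"
  have eq: "{a \<in> alt_seqs (Suc (Suc n)) k. last a = int j} = (\<lambda>b. b @ [int j]) ` B"
  proof (intro equalityI subsetI)
    fix a assume "a \<in> {a \<in> alt_seqs (Suc (Suc n)) k. last a = int j}"
    then have a: "a \<in> alt_seqs (Suc (Suc n)) k" "last a = int j" by auto
    have la: "length a = Suc (Suc n)" using a by (simp add: alt_length)
    then have ab: "a = butlast a @ [int j]" using a(2)
      by (metis append_butlast_last_id list.size(3) nat.distinct(1))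
    have lb: "length (butlast a) = Suc n" using la by simp
    from a(1) have "butlast a @ [int j] \<in> alt_seqs (Suc (Suc n)) k" using ab by simp
    then have hb: "butlast a \<in> alt_seqs (Suc n) k" "1 \<le> int j" "int j \<le> int k"
      "if even n then butlast a ! n \<le> int j else int j \<le> butlast a ! n"
      using alt_snoc[OF lb] by auto
    have "butlast a \<noteq> []" using lb by (auto simp del: length_butlast)
    then have lastb: "last (butlast a) = butlast a ! n" using lb by (subst last_conv_nth) auto
    obtain i where i: "last (butlast a) = int i" using alt_last_range[OF hb(1)]
      by (intro that[of "nat (last (butlast a))"]) simp
    have "i \<in> I" using alt_last_range[OF hb(1)] hb i lastb unfolding I_def by auto
    then have "butlast a \<in> B" using hb(1) i unfolding B_def by auto
    then show "a \<in> (\<lambda>b. b @ [int j]) ` B" using ab by blast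
  next
    fix a assume "a \<in> (\<lambda>b. b @ [int j]) ` B"
    then obtain b i where b: "a = b @ [int j]" "i \<in> I" "b \<in> alt_seqs (Suc n) k" "last b = int i"
      unfolding B_def by auto
    have lb: "length b = Suc n" using b by (simp add: alt_length)
    have "b \<noteq> []" using lb by auto
    then have lastb: "last b = b ! n" using lb by (subst last_conv_nth) auto
    have "b @ [int j] \<in> alt_seqs (Suc (Suc n)) k"
      using alt_snoc[OF lb] b lastb b(2) unfolding I_def by (auto split: if_splits)
    then show "a \<in> {a \<in> alt_seqs (Suc (Suc n)) k. last a = int j}" using b by simp
  qed
  have "card {a \<in> alt_seqs (Suc (Suc n)) k. last a = int j} = card B"
    unfolding eq by (rule card_image) (auto simp: inj_on_def)
  also have "\<dots> = (\<Sum>i\<in>I. card {b \<in> alt_seqs (Suc n) k. last b = int i})"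
    unfolding B_def
    by (rule card_UN_disjoint) (auto simp: I_def finite_alt)
  also have "\<dots> = (\<Sum>i\<in>I. cnt k (Suc n) i)" using Suc by simp
  also have "\<dots> = cnt k (Suc (Suc n)) j" by (simp add: I_def)
  finally show ?case .
qed

lemma card_alt: "card (alt_seqs (Suc n) k) = (\<Sum>j=1..k. cnt k (Suc n) j)"
proof -
  have "alt_seqs (Suc n) k = (\<Union>j\<in>{1..k}. {a \<in> alt_seqs (Suc n) k. last a = int j})"
  proof (intro equalityI subsetI)
    fix a assume a: "a \<in> alt_seqs (Suc n) k"
    obtain j where "last a = int j" using alt_last_range[OF a]
      by (intro that[of "nat (last a)"]) simp
    then show "a \<in> (\<Union>j\<in>{1..k}. {a \<in> alt_seqs (Suc n) k. last a = int j})"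
      using a alt_last_range[OF a] by auto
  qed auto
  then have "card (alt_seqs (Suc n) k) = card (\<Union>j\<in>{1..k}. {a \<in> alt_seqs (Suc n) k. last a = int j})"
    by simp
  also have "\<dots> = (\<Sum>j=1..k. card {a \<in> alt_seqs (Suc n) k. last a = int j})"
    by (rule card_UN_disjoint) (auto simp: finite_alt)
  also have "\<dots> = (\<Sum>j=1..k. cnt k (Suc n) j)" by (simp add: card_last)
  finally show ?thesis .
qed

lemma card_alt0: "card (alt_seqs 0 k) = 1"
proof -
  have "alt_seqs 0 k = {[]}" by (auto simp: alt_seqs_def)
  then show ?thesis by simp
qed



definition PP :: "nat \<Rightarrow> nat \<Rightarrow> real fps" where
  "PP k j = Abs_fps (\<lambda>n. if odd n then real (cnt k n j) else 0)"
definition QQ :: "nat \<Rightarrow> nat \<Rightarrow> real fps" where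
  "QQ k j = Abs_fps (\<lambda>n. if even n then real (cnt k n j) else 0)"

lemma cnt0: "cnt k n 0 = 0"
proof (cases n)
  case (Suc m) then show ?thesis by (cases m) auto
qed simp

lemma Q0: "QQ k 0 = 0"
  by (rule fps_ext) (simp add: QQ_def cnt0)

lemma Qdef: "j \<le> k \<Longrightarrow> QQ k j = fps_X * (\<Sum>i=1..j. PP k i)"
proof (rule fps_ext)
  fix n assume jk: "j \<le> k"
  show "fps_nth (QQ k j) n = fps_nth (fps_X * (\<Sum>i=1..j. PP k i)) n"
  proof (cases n)
    case 0 then show ?thesis by (simp add: QQ_def)
  next
    case (Suc m)
    show ?thesis
    proof (cases m)
      case 0 then show ?thesis using Suc by (simp add: QQ_def PP_def fps_sum_nth)
    next
      case (Suc l)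
      then show ?thesis using \<open>n = Suc m\<close> jk
        by (auto simp: QQ_def PP_def fps_sum_nth)
    qed
  qed
qed

lemma Pdef: "1 \<le> j \<Longrightarrow> j \<le> k \<Longrightarrow> PP k j = fps_X + fps_X * (\<Sum>i=j..k. QQ k i)"
proof (rule fps_ext)
  fix n assume jk: "1 \<le> j" "j \<le> k"
  show "fps_nth (PP k j) n = fps_nth (fps_X + fps_X * (\<Sum>i=j..k. QQ k i)) n"
  proof (cases n)
    case 0 then show ?thesis by (simp add: PP_def)
  next
    case (Suc m)
    show ?thesis
    proof (cases m)
      case 0 then show ?thesis using Suc jk by (simp add: QQ_def PP_def fps_sum_nth cnt0)
    next
      case (Suc l)
      then show ?thesis using \<open>n = Suc m\<close> jk
        by (auto simp: QQ_def PP_def fps_sum_nth)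
    qed
  qed
qed

lemma Gdef: "G k = 1 + fps_X + fps_X * (\<Sum>j=1..k. PP k j + QQ k j)"
proof (rule fps_ext)
  fix n
  show "fps_nth (G k) n = fps_nth (1 + fps_X + fps_X * (\<Sum>j=1..k. PP k j + QQ k j)) n"
  proof (cases n)
    case 0 then show ?thesis by (simp add: G_def)
  next
    case (Suc m)
    show ?thesis
    proof (cases m)
      case 0 then show ?thesis using Suc by (simp add: G_def PP_def QQ_def fps_sum_nth card_alt0)
    next
      case (Suc l)
      have "fps_nth (G k) n = real (\<Sum>j=1..k. cnt k (Suc l) j)" using Suc \<open>n = Suc m\<close>
        by (simp add: G_def card_alt)
      also have "\<dots> = (\<Sum>j=1..k. fps_nth (PP k j + QQ k j) (Suc l))"
        unfolding of_nat_sum by (rule sum.cong) (auto simp: PP_def QQ_def)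
      finally show ?thesis using Suc \<open>n = Suc m\<close> by (simp add: fps_sum_nth)
    qed
  qed
qed


lemma r1: "1 \<le> j \<Longrightarrow> j < k \<Longrightarrow> PP k j = PP k (Suc j) + fps_X * QQ k j"
proof -
  assume j: "1 \<le> j" "j < k"
  have "PP k j = fps_X + fps_X * (\<Sum>i=j..k. QQ k i)" using j by (simp add: Pdef)
  also have "(\<Sum>i=j..k. QQ k i) = QQ k j + (\<Sum>i=Suc j..k. QQ k i)"
    using j by (simp add: sum.atLeast_Suc_atMost)
  also have "PP k (Suc j) = fps_X + fps_X * (\<Sum>i=Suc j..k. QQ k i)" using j by (simp add: Pdef)
  ultimately show ?thesis by (simp add: algebra_simps)
qed

lemma r2: "Suc j \<le> k \<Longrightarrow> QQ k (Suc j) = QQ k j + fps_X * PP k (Suc j)"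
proof -
  assume j: "Suc j \<le> k"
  have "QQ k (Suc j) = fps_X * (\<Sum>i=1..Suc j. PP k i)" using j by (simp add: Qdef)
  also have "(\<Sum>i=1..Suc j. PP k i) = (\<Sum>i=1..j. PP k i) + PP k (Suc j)"
    by (simp add: sum.cl_ivl_Suc)
  also have "QQ k j = fps_X * (\<Sum>i=1..j. PP k i)" using j by (simp add: Qdef)
  ultimately show ?thesis by (simp add: algebra_simps)
qed

lemma r3: "1 \<le> k \<Longrightarrow> PP k k = fps_X + fps_X * QQ k k"
  by (simp add: Pdef)

lemma sol: "i < k \<Longrightarrow> PP k (Suc i) = PP k 1 * (S (Suc i) fps_X - S i fps_X) \<and>
    QQ k (Suc i) = PP k 1 * fps_X * S (Suc i) fps_X"
proof (induction i)
  case 0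
  have "QQ k 1 = QQ k 0 + fps_X * PP k 1" using r2[of 0 k] 0 by simp
  then show ?case by (simp add: S012 Q0 algebra_simps)
next
  case (Suc i)
  then have ih: "PP k (Suc i) = PP k 1 * (S (Suc i) fps_X - S i fps_X)"
    "QQ k (Suc i) = PP k 1 * fps_X * S (Suc i) fps_X" by auto
  have a: "PP k (Suc i) = PP k (Suc (Suc i)) + fps_X * QQ k (Suc i)" using r1[of "Suc i" k] Suc by simp
  have b: "QQ k (Suc (Suc i)) = QQ k (Suc i) + fps_X * PP k (Suc (Suc i))" using r2[of "Suc i" k] Suc by simp
  have s: "S (Suc (Suc i)) (fps_X::real fps) = (2 - fps_X^2) * S (Suc i) fps_X - S i fps_X"
    by (rule Srec) simp_all
  have p: "PP k (Suc (Suc i)) = PP k 1 * (S (Suc (Suc i)) fps_X - S (Suc i) fps_X)"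
    using a ih s by algebra
  moreover have "QQ k (Suc (Suc i)) = PP k 1 * fps_X * S (Suc (Suc i)) fps_X"
    using b ih p by algebra
  ultimately show ?case by simp
qed

lemma bnd: "1 \<le> k \<Longrightarrow> PP k 1 * (S (Suc k) fps_X - S k fps_X) = fps_X"
proof -
  assume k: "1 \<le> k"
  then obtain i where i: "k = Suc i" by (cases k) auto
  have h: "PP k k = PP k 1 * (S k fps_X - S i fps_X)" "QQ k k = PP k 1 * fps_X * S k fps_X"
    using sol[of i k] i by auto
  have s: "S (Suc k) (fps_X::real fps) = (2 - fps_X^2) * S k fps_X - S i fps_X"
    by (rule Srec) (simp_all add: i)
  show ?thesis using r3[OF k] h s by algebra
qed

lemma Gsol: "1 \<le> k \<Longrightarrow> G k = 1 + PP k 1 + PP k 1 * fps_X * S k fps_X"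
proof -
  assume k: "1 \<le> k"
  then obtain i where i: "k = Suc i" by (cases k) auto
  have "G k = 1 + fps_X + fps_X * (\<Sum>j=1..k. PP k j) + fps_X * (\<Sum>j=1..k. QQ k j)"
    by (simp add: Gdef sum.distrib algebra_simps)
  also have "fps_X * (\<Sum>j=1..k. PP k j) = QQ k k" by (simp add: Qdef)
  also have "fps_X * (\<Sum>j=1..k. QQ k j) = PP k 1 - fps_X" using k by (simp add: Pdef)
  also have "QQ k k = PP k 1 * fps_X * S k fps_X" using sol[of i k] i by simp
  finally show ?thesis by simp
qed

lemma S_nth0: "fps_nth (S n (fps_X :: real fps)) 0 = real n"
proof (induction n rule: less_induct)
  case (less n)
  show ?case
  proof (cases n)
    case 0 then show ?thesis by (simp add: S012)
  next
    case (Suc m)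
    show ?thesis
    proof (cases m)
      case 0 then show ?thesis using Suc by (simp add: S012)
    next
      case (Suc l)
      have "S (Suc (Suc l)) (fps_X::real fps) = (2 - fps_X^2) * S (Suc l) fps_X - S l fps_X"
        by (rule Srec) simp_all
      then show ?thesis using less \<open>n = Suc m\<close> Suc
        by (simp add: power2_eq_square)
    qed
  qed
qed

lemma V_nth0: "fps_nth (V n (fps_X :: real fps)) 0 = V n 0"
proof (induction n rule: less_induct)
  case (less n)
  show ?case
  proof (cases n)
    case 0 then show ?thesis by (simp add: V01)
  next
    case (Suc m)
    show ?thesis
    proof (cases m)
      case 0 then show ?thesis using Suc by (simp add: V01)
    next
      case (Suc l)
      have "V (Suc (Suc l)) (fps_X::real fps) = fps_X * V (Suc l) fps_X - V l fps_X"
        by (rule Vrec) simp_all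
      moreover have "V (Suc (Suc l)) (0::real) = 0 * V (Suc l) 0 - V l 0"
        by (rule Vrec) simp_all
      ultimately show ?thesis using less \<open>n = Suc m\<close> Suc by simp
    qed
  qed
qed


lemma V0_facts: "V n (0::real) * V (Suc n) 0 = 0 \<and> V n (0::real) ^ 2 + V (Suc n) 0 ^ 2 = 1"
proof (induction n)
  case 0 then show ?case by (simp add: V01)
next
  case (Suc n)
  have e: "V (Suc (Suc n)) (0::real) = - V n 0" by (rule Vrec[THEN trans]) simp_all
  note i1 = conjunct1[OF Suc.IH] and i2 = conjunct2[OF Suc.IH]
  have "V (Suc n) (0::real) * V (Suc (Suc n)) 0 = - (V n 0 * V (Suc n) 0)" unfolding e by simp
  then have "V (Suc n) (0::real) * V (Suc (Suc n)) 0 = 0" using i1 by simp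
  moreover have "V (Suc n) (0::real) ^ 2 + V (Suc (Suc n)) 0 ^ 2 = V n 0 ^ 2 + V (Suc n) 0 ^ 2"
    unfolding e by simp
  then have "V (Suc n) (0::real) ^ 2 + V (Suc (Suc n)) 0 ^ 2 = 1" using i2 by (rule trans)
  ultimately show ?case by blast
qed

lemma half: "2 * (fps_const (1/2) * fps_X) = (fps_X :: real fps)"
proof -
  have "(2::real fps) * fps_const (1/2) = fps_const (2 * (1/2))"
    by (simp add: fps_const_mult[symmetric] numeral_fps_const)
  then show ?thesis by (simp add: mult.assoc[symmetric])
qed

lemma chebU_V: "chebU (int n) (fps_const (1/2) * fps_X) = V n (fps_X :: real fps)"
  by (simp add: chebU_def chebU_nat_V[OF half])

lemma G_times:
  fixes k :: nat and Dn Nm :: "real fps"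
  assumes k: "1 \<le> k"
    and id: "(S (Suc k) fps_X - S k fps_X + fps_X + fps_X * (fps_X * S k fps_X)) * Dn
             = - Nm * (S (Suc k) fps_X - S k fps_X)"
  shows "G k * Dn = - Nm"
proof -
  define W :: "real fps" where "W = S (Suc k) fps_X - S k fps_X"
  define p where "p = PP k 1"
  have pW: "p * W = fps_X" using bnd[OF k] by (simp add: p_def W_def)
  have G: "G k = 1 + p + p * fps_X * S k fps_X" using Gsol[OF k] by (simp add: p_def)
  have "G k * W = W + p * W + p * W * (fps_X * S k fps_X)" unfolding G by (simp add: algebra_simps)
  also have "\<dots> = W + fps_X + fps_X * (fps_X * S k fps_X)" unfolding pW ..
  finally have GW: "G k * W = W + fps_X + fps_X * (fps_X * S k fps_X)" .
  have "(G k * Dn) * W = (- Nm) * W" using id GW unfolding W_def[symmetric]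
    by (simp add: algebra_simps)
  moreover have "W \<noteq> 0"
  proof
    assume "W = 0"
    then have "fps_nth W 0 = 0" by simp
    then show False unfolding W_def by (simp add: S_nth0)
  qed
  ultimately show ?thesis by (metis mult_cancel_right mult_minus_left)
qed


lemma nz_aux: "(s0::real) * s0 = 1 \<Longrightarrow> b * a = 0 \<Longrightarrow> b^2 + a^2 = 1 \<Longrightarrow> a + s0 * b \<noteq> 0"
proof
  assume "(s0::real) * s0 = 1" "b * a = 0" "b^2 + a^2 = 1" "a + s0 * b = 0"
  then show False by algebra
qed

lemma main_big:
  fixes m :: nat
  defines "k \<equiv> m + 3"
  shows "G k * (V (m+3) fps_X + (-1)^k * V (m+2) fps_X) = - (V (m+1) fps_X + (-1)^k * V m (fps_X::real fps))"
    and "V (m+3) fps_X + (-1)^k * V (m+2) (fps_X::real fps) \<noteq> 0"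
proof -
  define x :: "real fps" where "x = fps_X"
  define s :: "real fps" where "s = (-1)^k"
  have k1: "1 \<le> k" by (simp add: k_def)
  have h1: "s * s = 1" by (simp add: s_def power_mult_distrib[symmetric] flip: power_add)
  have h2: "S (Suc k) x - S k x = s * V (2*m+6) x" using S_diff[of k x]
    by (simp add: s_def k_def)
  have h3: "x * S k x = - (s * V (2*m+5) x)" using S_V[of x "m+2"]
    by (simp add: s_def k_def numeral_eq_Suc)
  have h4: "V (2*m+6) x = x * V (2*m+5) x - V (2*m+4) x" by (rule Vrec) simp_all
  have h5: "V (2*m+6) x = V (m+3) x * V (m+3) x - V (m+2) x * V (m+2) x"
    using V_add[of "m+2" "m+2" x] by (simp add: numeral_eq_Suc)
  have h6: "V (2*m+4) x = V (m+2) x * V (m+2) x - V (m+1) x * V (m+1) x"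
    using V_add[of "m+1" "m+1" x] by (simp add: numeral_eq_Suc)
  have h7: "V (m+2) x ^ 2 - x * V (m+2) x * V (m+1) x + V (m+1) x ^ 2 = 1"
    using V_cassini[of "m+1" x] by (simp add: numeral_eq_Suc)
  have h8: "V (m+3) x = x * V (m+2) x - V (m+1) x" by (rule Vrec) simp_all
  have h9: "V (m+2) x = x * V (m+1) x - V m x" by (rule Vrec) simp_all
  have id: "(S (Suc k) x - S k x + x + x * (x * S k x)) * (V (m+3) x + s * V (m+2) x)
      = - (V (m+1) x + s * V m x) * (S (Suc k) x - S k x)"
    by (rule key_alg[OF h1 h2 h3 h4 h5 h6 h7 h8 h9])
  show "G k * (V (m+3) fps_X + (-1)^k * V (m+2) fps_X) = - (V (m+1) fps_X + (-1)^k * V m (fps_X::real fps))"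
    using G_times[OF k1 id[unfolded x_def s_def]] .
  have a: "fps_nth (V (m+3) fps_X + (-1)^k * V (m+2) (fps_X::real fps)) 0
      = V (m+3) 0 + (-1)^k * V (m+2) (0::real)"
    by (simp add: V_nth0 fps_nth_power_0)
  have b: "V (m+3) 0 + (-1)^k * V (m+2) (0::real) \<noteq> 0"
    apply (rule nz_aux)
    using V0_facts[of "m+2"] by (auto simp: numeral_eq_Suc power_mult_distrib[symmetric] mult.commute
       simp flip: power_add)
  show "V (m+3) fps_X + (-1)^k * V (m+2) (fps_X::real fps) \<noteq> 0"
  proof
    assume z: "V (m+3) fps_X + (-1)^k * V (m+2) (fps_X::real fps) = 0"
    have "fps_nth (V (m+3) fps_X + (-1)^k * V (m+2) (fps_X::real fps)) 0 = 0" unfolding z by simp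
    then show False using a b by simp
  qed
qed


lemma chebU_m1: "chebU (-1) (y::'a::comm_ring_1) = 0" by (simp add: chebU_def)
lemma chebU_m2: "chebU (-2) (y::'a::comm_ring_1) = -1" by (simp add: chebU_def)

theorem corollary11:
  fixes k :: nat
  assumes "k \<ge> 1"
  shows "G k = - (chebU (int k - 2) (fps_const (1/2) * fps_X) + (-1) ^ k * chebU (int k - 3) (fps_const (1/2) * fps_X))
                / (chebU (int k) (fps_const (1/2) * fps_X) + (-1) ^ k * chebU (int k - 1) (fps_const (1/2) * fps_X))"
proof -
  define y :: "real fps" where "y = fps_const (1/2) * fps_X"
  define Dn where "Dn = chebU (int k) y + (-1) ^ k * chebU (int k - 1) y"
  define Nm where "Nm = chebU (int k - 2) y + (-1) ^ k * chebU (int k - 3) y"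
  have cU: "\<And>n. chebU (int n) y = V n fps_X" by (simp add: y_def chebU_V)
  have GD: "G k * Dn = - Nm \<and> Dn \<noteq> 0"
  proof (cases "k \<ge> 3")
    case True
    then obtain m where m: "k = m + 3" by (metis add.commute le_iff_add)
    have e: "int k = int (m+3)" "int k - 1 = int (m+2)" "int k - 2 = int (m+1)" "int k - 3 = int m"
      using m by simp_all
    show ?thesis unfolding Dn_def Nm_def e(2-4) cU unfolding m using main_big[of m] by simp
  next
    case False
    then have "k = 1 \<or> k = 2" using assms by auto
    then show ?thesis
    proof
      assume k: "k = 1"
      have D: "Dn = fps_X - 1" unfolding Dn_def k using cU[of 1] cU[of 0] by (simp add: V01)
      have N: "Nm = 1" unfolding Nm_def k by (simp add: chebU_m1 chebU_m2)
      have id: "(S (Suc 1) fps_X - S 1 fps_X + fps_X + fps_X * (fps_X * S 1 fps_X)) * Dn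
             = - Nm * (S (Suc 1) fps_X - S 1 (fps_X :: real fps))"
        unfolding D N by (simp add: S012 algebra_simps power2_eq_square)
      have "Dn \<noteq> 0"
      proof
        assume "Dn = 0"
        then have "fps_nth Dn 0 = 0" by simp
        then show False unfolding D by simp
      qed
      then show ?thesis using G_times[of 1 Dn Nm] id k by simp
    next
      assume k: "k = 2"
      have D: "Dn = fps_X * fps_X - 1 + fps_X" unfolding Dn_def k using cU[of 2] cU[of 1] by (simp add: V01)
      have N: "Nm = 1" unfolding Nm_def k using cU[of 0] by (simp add: chebU_m1 V01)
      have s3: "S 3 (fps_X::real fps) = (2 - fps_X^2) * S 2 fps_X - S 1 fps_X" by (rule Srec) simp_all
      have id: "(S (Suc 2) fps_X - S 2 fps_X + fps_X + fps_X * (fps_X * S 2 fps_X)) * Dn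
             = - Nm * (S (Suc 2) fps_X - S 2 (fps_X :: real fps))"
      proof -
        have e3: "S (Suc 2) (fps_X::real fps) = S 3 fps_X" by (simp add: numeral_eq_Suc)
        have s1: "S 1 (fps_X::real fps) = 1" and s2: "S 2 (fps_X::real fps) = 2 - fps_X^2" by (simp_all add: S012)
        show ?thesis unfolding D N e3 using s3 s1 s2 by algebra
      qed
      have "Dn \<noteq> 0"
      proof
        assume "Dn = 0"
        then have "fps_nth Dn 0 = 0" by simp
        then show False unfolding D by simp
      qed
      then show ?thesis using G_times[of 2 Dn Nm] id k by simp
    qed
  qed
  then have n1: "(- Nm) / Dn = G k" by (metis nonzero_mult_div_cancel_right)
  have n2: "Nm / Dn = - G k" using GD
    by (metis minus_mult_left minus_minus nonzero_mult_div_cancel_right)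
  show ?thesis using n1 n2 unfolding Dn_def Nm_def y_def by simp
qed


end
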